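(* Let $f_1,\dots,f_n$ satisfy Assumption A1 and let $R:=\mathrm{diam}(\mathrm{Pareto}(F))$. Then for any $\beta\in\Delta^{n-1}$ and $x_\beta=x^*(\beta)$, \[\|\nabla F(x_\beta)^\top\|_{1,2}\le LR.\]
   Context: Assumption A1: each $f_i:\mathbb{R}^d\to\mathbb{R}$ is twice differentiable with $\mu\mathbf{I}\preceq\nabla^2 f_i\preceq L\mathbf{I}$, $0<\mu\le L$. $F=(f_1,\dots,f_n)$, $\nabla F(x)\in\mathbb{R}^{n\times d}$ its Jacobian (rows $\nabla f_i(x)^\top$), $\Delta^{n-1}$ the simplex, $x^*(\beta)=x_\beta=\operatorname{argmin}_x\sum_i\beta_if_i(x)$. $\mathrm{Pareto}(F)$ is the set of Pareto optimal points (equivalently $x$ with $\sum_i\beta_i\nabla f_i(x)=0$ for some $\beta\in\Delta^{n-1}$), diameter in $\ell_2$. $\|A\|_{1,2}:=\sup_{\|z\|_1=1}\|Az\|_2$. *)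

theory Defs
  imports "HOL-Analysis.Analysis"
begin

definition pareto_set :: "('i \<Rightarrow> 'a \<Rightarrow> real) \<Rightarrow> 'a set" where
  "pareto_set f = {x. \<not> (\<exists>y. (\<forall>i. f i y \<le> f i x) \<and> (\<exists>i. f i y < f i x))}"

definition norm_1_2 :: "(('i::finite \<Rightarrow> real) \<Rightarrow> 'a::real_normed_vector) \<Rightarrow> real" where
  "norm_1_2 A = Sup {norm (A z) | z. (\<Sum>i\<in>UNIV. \<bar>z i\<bar>) = 1}"

end

theory Submission imports Defs begin

lemma taylor_f:
  fixes f :: "'a::euclidean_space \<Rightarrow> real" and g :: "'a \<Rightarrow> 'a" and H :: "'a \<Rightarrow> 'a \<Rightarrow> 'a"
  assumes fd: "\<And>x. (f has_derivative (\<lambda>h. g x \<bullet> h)) (at x)"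
    and gd: "\<And>x. (g has_derivative H x) (at x)"
    and lo: "\<And>x h. \<mu> * (norm h)\<^sup>2 \<le> h \<bullet> H x h"
    and up: "\<And>x h. h \<bullet> H x h \<le> L * (norm h)\<^sup>2"
  shows "f x + g x \<bullet> (y - x) + \<mu> / 2 * (norm (y - x))\<^sup>2 \<le> f y \<and>
         f y \<le> f x + g x \<bullet> (y - x) + L / 2 * (norm (y - x))\<^sup>2"
proof -
  define d where "d = y - x"
  define diff where "diff = (\<lambda>m::nat. if m = 0 then (\<lambda>t::real. f (x + t *\<^sub>R d))
      else if m = 1 then (\<lambda>t. g (x + t *\<^sub>R d) \<bullet> d) else (\<lambda>t. d \<bullet> H (x + t *\<^sub>R d) d))"
  have lin: "((\<lambda>t::real. x + t *\<^sub>R d) has_derivative (\<lambda>s. s *\<^sub>R d)) (at t)" for t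
    by (auto intro!: derivative_eq_intros)
  have D1: "DERIV (\<lambda>t. f (x + t *\<^sub>R d)) t :> g (x + t *\<^sub>R d) \<bullet> d" for t
  proof -
    have "((\<lambda>t. f (x + t *\<^sub>R d)) has_derivative (\<lambda>s. g (x + t *\<^sub>R d) \<bullet> (s *\<^sub>R d))) (at t)"
      using has_derivative_compose[OF lin fd] .
    moreover have "(\<lambda>s. g (x + t *\<^sub>R d) \<bullet> (s *\<^sub>R d)) = (*) (g (x + t *\<^sub>R d) \<bullet> d)"
      by (auto simp: fun_eq_iff mult.commute)
    ultimately show ?thesis by (simp add: has_field_derivative_def)
  qed
  have D2: "DERIV (\<lambda>t. g (x + t *\<^sub>R d) \<bullet> d) t :> d \<bullet> H (x + t *\<^sub>R d) d" for t
  proof -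
    have a: "((\<lambda>t. g (x + t *\<^sub>R d)) has_derivative (\<lambda>s. H (x + t *\<^sub>R d) (s *\<^sub>R d))) (at t)"
      using has_derivative_compose[OF lin gd] .
    have "((\<lambda>t. g (x + t *\<^sub>R d) \<bullet> d) has_derivative (\<lambda>s. H (x + t *\<^sub>R d) (s *\<^sub>R d) \<bullet> d)) (at t)"
      using bounded_linear.has_derivative[OF bounded_linear_inner_left a] .
    moreover have "linear (H (x + t *\<^sub>R d))"
      using gd has_derivative_linear by blast
    then have "(\<lambda>s. H (x + t *\<^sub>R d) (s *\<^sub>R d) \<bullet> d) = (*) (d \<bullet> H (x + t *\<^sub>R d) d)"
      by (auto simp: fun_eq_iff linear_scale inner_commute)
    ultimately show ?thesis by (simp add: has_field_derivative_def)
  qed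
  have "\<exists>t::real. 0 < t \<and> t < 1 \<and>
      diff 0 1 = sum (\<lambda>m. (diff m 0 / fact m) * 1 ^ m) {..<2} + (diff 2 t / fact 2) * 1 ^ 2"
    apply (rule Maclaurin[where diff=diff])
    using D1 D2 by (auto simp: diff_def less_2_cases_iff)
  then obtain t where "f y = f x + g x \<bullet> d + (d \<bullet> H (x + t *\<^sub>R d) d) / 2"
    by (auto simp: diff_def d_def numeral_2_eq_2)
  moreover note lo[where x="x + t *\<^sub>R d" and h=d] up[where x="x + t *\<^sub>R d" and h=d]
  ultimately show ?thesis unfolding d_def by auto
qed


lemma grad_zero_at_min:
  fixes \<phi> :: "'a::real_inner \<Rightarrow> real"
  assumes U: "\<And>x y. \<phi> y \<le> \<phi> x + g x \<bullet> (y - x) + L / 2 * (norm (y - x))\<^sup>2"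
    and L: "0 < L" and m: "\<And>y. \<phi> x0 \<le> \<phi> y"
  shows "g x0 = 0"
proof -
  let ?v = "g x0"
  have "\<phi> x0 \<le> \<phi> (x0 - (1/L) *\<^sub>R ?v)" by (rule m)
  also have "\<dots> \<le> \<phi> x0 + ?v \<bullet> (- (1/L) *\<^sub>R ?v) + L / 2 * (norm (- (1/L) *\<^sub>R ?v))\<^sup>2"
    using U[where x=x0 and y="x0 - (1/L) *\<^sub>R ?v"] by simp
  also have "\<dots> = \<phi> x0 - (norm ?v)\<^sup>2 / (2 * L)"
    using L by (simp add: power2_norm_eq_inner[symmetric] power2_eq_square field_simps)
  finally have "(norm ?v)\<^sup>2 / (2 * L) \<le> 0" by simp
  then have "(norm ?v)\<^sup>2 \<le> 0" using L by (simp add: divide_le_0_iff)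
  then show ?thesis by simp
qed

lemma grad_bound_min:
  fixes \<phi> :: "'a::real_inner \<Rightarrow> real"
  assumes U: "\<And>x y. \<phi> y \<le> \<phi> x + g x \<bullet> (y - x) + L / 2 * (norm (y - x))\<^sup>2"
    and L: "0 < L" and m: "\<And>y. \<phi> x0 \<le> \<phi> y"
  shows "norm (g y) \<le> L * norm (y - x0)"
proof -
  have g0: "g x0 = 0" by (rule grad_zero_at_min[OF U L m])
  let ?v = "g y"
  have "\<phi> x0 \<le> \<phi> (y - (1/L) *\<^sub>R ?v)" by (rule m)
  also have "\<dots> \<le> \<phi> y + ?v \<bullet> (- (1/L) *\<^sub>R ?v) + L / 2 * (norm (- (1/L) *\<^sub>R ?v))\<^sup>2"
    using U[where x=y and y="y - (1/L) *\<^sub>R ?v"] by simp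
  also have "\<dots> = \<phi> y - (norm ?v)\<^sup>2 / (2 * L)"
    using L by (simp add: power2_norm_eq_inner[symmetric] power2_eq_square field_simps)
  finally have 1: "(norm ?v)\<^sup>2 / (2 * L) \<le> \<phi> y - \<phi> x0" by simp
  have 2: "\<phi> y \<le> \<phi> x0 + L / 2 * (norm (y - x0))\<^sup>2"
    using U[where x=x0 and y=y] g0 by simp
  have "(norm ?v)\<^sup>2 / (2 * L) \<le> L / 2 * (norm (y - x0))\<^sup>2" using 1 2 by simp
  then have "(norm ?v)\<^sup>2 \<le> (L * norm (y - x0))\<^sup>2"
    using L by (simp add: field_simps power2_eq_square)
  then show ?thesis
    by (rule power2_le_imp_le) (use L in simp)
qed

lemma min_unique:
  fixes \<phi> :: "'a::real_inner \<Rightarrow> real"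
  assumes Lo: "\<And>x y. \<phi> x + g x \<bullet> (y - x) + \<mu> / 2 * (norm (y - x))\<^sup>2 \<le> \<phi> y"
    and mu: "0 < \<mu>" and g0: "g x0 = 0" and le: "\<phi> y \<le> \<phi> x0"
  shows "y = x0"
proof -
  have "\<mu> / 2 * (norm (y - x0))\<^sup>2 \<le> 0" using Lo[of x0 y] g0 le by simp
  then have "(norm (y - x0))\<^sup>2 \<le> 0" using mu by (simp add: mult_le_0_iff)
  then show ?thesis by simp
qed

lemma mono_min:
  fixes \<phi> :: "'a::real_inner \<Rightarrow> real"
  assumes Lo: "\<And>x y. \<phi> x + g x \<bullet> (y - x) + \<mu> / 2 * (norm (y - x))\<^sup>2 \<le> \<phi> y"
    and g0: "g x0 = 0"
  shows "\<mu> * (norm (x - x0))\<^sup>2 \<le> g x \<bullet> (x - x0)"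
proof -
  have 1: "\<phi> x + g x \<bullet> (x0 - x) + \<mu> / 2 * (norm (x0 - x))\<^sup>2 \<le> \<phi> x0" by (rule Lo)
  have 2: "\<phi> x0 + \<mu> / 2 * (norm (x - x0))\<^sup>2 \<le> \<phi> x" using Lo[of x0 x] g0 by simp
  have "norm (x0 - x) = norm (x - x0)" by (rule norm_minus_commute)
  moreover have "g x \<bullet> (x0 - x) = - (g x \<bullet> (x - x0))" by (simp add: inner_diff_right)
  ultimately show ?thesis using 1 2 by simp
qed

lemma exists_min:
  fixes \<phi> :: "'a::euclidean_space \<Rightarrow> real"
  assumes Lo: "\<And>x y. \<phi> x + g x \<bullet> (y - x) + \<mu> / 2 * (norm (y - x))\<^sup>2 \<le> \<phi> y"
    and mu: "0 < \<mu>" and c: "continuous_on UNIV \<phi>"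
  shows "\<exists>x0. \<forall>y. \<phi> x0 \<le> \<phi> y"
proof -
  define r where "r = 2 * norm (g 0) / \<mu>"
  have r0: "0 \<le> r" using mu by (simp add: r_def)
  obtain x0 where x0: "x0 \<in> cball 0 r" and m: "\<And>y. y \<in> cball 0 r \<Longrightarrow> \<phi> x0 \<le> \<phi> y"
    using continuous_attains_inf[of "cball 0 r" \<phi>] c r0
    by (metis compact_cball cball_eq_empty continuous_on_subset not_less subset_UNIV)
  have m0: "\<phi> x0 \<le> \<phi> 0" using m r0 by simp
  have "\<phi> x0 \<le> \<phi> y" for y
  proof (cases "y \<in> cball 0 r")
    case True then show ?thesis by (rule m)
  next
    case False
    then have ny: "norm y > r" by simp
    have "\<phi> 0 + g 0 \<bullet> y + \<mu> / 2 * (norm y)\<^sup>2 \<le> \<phi> y" using Lo[of 0 y] by simp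
    moreover have "- (norm (g 0) * norm y) \<le> g 0 \<bullet> y"
      using Cauchy_Schwarz_ineq2[of "g 0" y] by (simp add: abs_le_iff)
    moreover have "norm (g 0) * norm y \<le> \<mu> / 2 * (norm y)\<^sup>2"
    proof -
      have "norm (g 0) = \<mu> / 2 * r" using mu by (simp add: r_def)
      then have "norm (g 0) * norm y = \<mu> / 2 * r * norm y" by simp
      also have "\<dots> \<le> \<mu> / 2 * norm y * norm y"
        using ny mu r0 by (intro mult_right_mono mult_left_mono) auto
      finally show ?thesis by (simp add: power2_eq_square)
    qed
    ultimately have "\<phi> 0 \<le> \<phi> y" by linarith
    with m0 show ?thesis by simp
  qed
  then show ?thesis by blast
qed


theorem lemma10:
  fixes f :: "'i::finite \<Rightarrow> 'a::euclidean_space \<Rightarrow> real"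
    and grad :: "'i \<Rightarrow> 'a \<Rightarrow> 'a"
    and hess :: "'i \<Rightarrow> 'a \<Rightarrow> 'a \<Rightarrow> 'a"
    and \<mu> L :: real
    and \<beta> :: "'i \<Rightarrow> real"
    and x\<beta> :: 'a
  assumes mu_pos: "0 < \<mu>" and mu_le_L: "\<mu> \<le> L"
    and grad: "\<And>i x. (f i has_derivative (\<lambda>h. grad i x \<bullet> h)) (at x)"
    and hess: "\<And>i x. (grad i has_derivative hess i x) (at x)"
    and hess_lower: "\<And>i x h. \<mu> * (norm h)\<^sup>2 \<le> h \<bullet> hess i x h"
    and hess_upper: "\<And>i x h. h \<bullet> hess i x h \<le> L * (norm h)\<^sup>2"
    and beta_nonneg: "\<And>i. 0 \<le> \<beta> i" and beta_sum: "(\<Sum>i\<in>UNIV. \<beta> i) = 1"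
    and x\<beta>_min: "\<And>y. (\<Sum>i\<in>UNIV. \<beta> i * f i x\<beta>) \<le> (\<Sum>i\<in>UNIV. \<beta> i * f i y)"
  shows "norm_1_2 (\<lambda>z. \<Sum>i\<in>UNIV. z i *\<^sub>R grad i x\<beta>) \<le> L * diameter (pareto_set f)"
proof -
  have L: "0 < L" using mu_pos mu_le_L by simp
  have T: "f i x + grad i x \<bullet> (y - x) + \<mu> / 2 * (norm (y - x))\<^sup>2 \<le> f i y \<and>
         f i y \<le> f i x + grad i x \<bullet> (y - x) + L / 2 * (norm (y - x))\<^sup>2" for i x y
    by (rule taylor_f[OF grad hess hess_lower hess_upper])
  have U: "\<And>x y. f i y \<le> f i x + grad i x \<bullet> (y - x) + L / 2 * (norm (y - x))\<^sup>2" for i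
    using T by blast
  have Lo: "\<And>x y. f i x + grad i x \<bullet> (y - x) + \<mu> / 2 * (norm (y - x))\<^sup>2 \<le> f i y" for i
    using T by blast
  have cont: "continuous_on UNIV (f i)" for i
    by (intro continuous_at_imp_continuous_on ballI has_derivative_continuous[OF grad])
  have "\<forall>i. \<exists>x0. \<forall>y. f i x0 \<le> f i y"
    using exists_min[OF Lo mu_pos cont] by blast
  then obtain xm where xm: "\<And>i y. f i (xm i) \<le> f i y" by (rule choice[THEN exE]) blast
  have g0: "grad i (xm i) = 0" for i
    by (rule grad_zero_at_min[OF U L xm])
  have gb: "norm (grad i y) \<le> L * norm (y - xm i)" for i y
    by (rule grad_bound_min[OF U L xm])
  have mono: "\<mu> * (norm (x - xm i))\<^sup>2 \<le> grad i x \<bullet> (x - xm i)" for i x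
    by (rule mono_min[OF Lo g0])
  define Fb where "Fb y = (\<Sum>i\<in>UNIV. \<beta> i * f i y)" for y
  define Gb where "Gb x = (\<Sum>i\<in>UNIV. \<beta> i *\<^sub>R grad i x)" for x
  have sumeq: "(\<Sum>i\<in>UNIV. \<beta> i * (f i x + grad i x \<bullet> (y - x) + c)) = Fb x + Gb x \<bullet> (y - x) + c"
    for x y c
  proof -
    have "(\<Sum>i\<in>UNIV. \<beta> i * (f i x + grad i x \<bullet> (y - x) + c)) =
      (\<Sum>i\<in>UNIV. \<beta> i * f i x) + (\<Sum>i\<in>UNIV. \<beta> i * (grad i x \<bullet> (y - x))) + (\<Sum>i\<in>UNIV. \<beta> i) * c"
      by (simp add: distrib_left sum.distrib sum_distrib_right)
    moreover have "Gb x \<bullet> (y - x) = (\<Sum>i\<in>UNIV. \<beta> i * (grad i x \<bullet> (y - x)))"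
      by (simp add: Gb_def inner_sum_left)
    ultimately show ?thesis by (simp add: Fb_def beta_sum)
  qed
  have FU: "Fb y \<le> Fb x + Gb x \<bullet> (y - x) + L / 2 * (norm (y - x))\<^sup>2" for x y
  proof -
    have "Fb y \<le> (\<Sum>i\<in>UNIV. \<beta> i * (f i x + grad i x \<bullet> (y - x) + L / 2 * (norm (y - x))\<^sup>2))"
      unfolding Fb_def by (intro sum_mono mult_left_mono U beta_nonneg)
    then show ?thesis by (simp only: sumeq)
  qed
  have FLo: "Fb x + Gb x \<bullet> (y - x) + \<mu> / 2 * (norm (y - x))\<^sup>2 \<le> Fb y" for x y
  proof -
    have "(\<Sum>i\<in>UNIV. \<beta> i * (f i x + grad i x \<bullet> (y - x) + \<mu> / 2 * (norm (y - x))\<^sup>2)) \<le> Fb y"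
      unfolding Fb_def by (intro sum_mono mult_left_mono Lo beta_nonneg)
    then show ?thesis by (simp only: sumeq)
  qed
  have Fmin: "Fb x\<beta> \<le> Fb y" for y using x\<beta>_min by (simp add: Fb_def)
  have Gb0: "Gb x\<beta> = 0" by (rule grad_zero_at_min[OF FU L Fmin])
  have Pb: "x\<beta> \<in> pareto_set f"
  proof -
    have "y = x\<beta>" if "\<forall>i. f i y \<le> f i x\<beta>" for y
    proof (rule min_unique[OF FLo mu_pos Gb0])
      show "Fb y \<le> Fb x\<beta>" unfolding Fb_def
        using that by (intro sum_mono mult_left_mono beta_nonneg) auto
    qed
    then show ?thesis unfolding pareto_set_def
      by (smt (verit, best) mem_Collect_eq)
  qed
  have Pm: "xm i \<in> pareto_set f" for i
  proof -
    have "y = xm i" if "\<forall>j. f j y \<le> f j (xm i)" for y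
      using that min_unique[OF Lo mu_pos g0] by blast
    then show ?thesis unfolding pareto_set_def
      by (smt (verit, best) mem_Collect_eq)
  qed
  define M where "M = (\<Sum>i\<in>UNIV. (1 + L / \<mu>) * norm (xm i))"
  have Mi: "(1 + L / \<mu>) * norm (xm i) \<le> M" for i
    unfolding M_def using L mu_pos
    by (intro member_le_sum) auto
  have M0: "0 \<le> M" using Mi[of undefined] L mu_pos
    by (meson order_trans zero_le_mult_iff norm_ge_zero divide_nonneg_pos less_imp_le add_nonneg_nonneg zero_le_one)
  have bnd: "norm x \<le> M" if xP: "x \<in> pareto_set f" for x
  proof (rule ccontr)
    assume "\<not> norm x \<le> M"
    then have nx: "norm x > M" by simp
    define d where "d = - x"
    have d0: "norm d > 0" using nx M0 by (cases "x = 0") (auto simp: d_def)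
    define a where "a i = grad i x \<bullet> d" for i
    have aneg: "a i < 0" for i
    proof -
      define r where "r = norm (x - xm i)"
      have "norm x \<le> r + norm (xm i)" unfolding r_def
        using norm_triangle_ineq[of "x - xm i" "xm i"] by simp
      then have rgt: "r > L / \<mu> * norm (xm i)" using Mi[of i] nx by (simp add: algebra_simps)
      have r0: "r > 0" using rgt L mu_pos
        by (smt (verit) divide_nonneg_pos mult_nonneg_nonneg norm_ge_zero)
      have "a i = - (grad i x \<bullet> (x - xm i)) - grad i x \<bullet> xm i"
        by (simp add: a_def d_def inner_diff_right)
      also have "\<dots> \<le> - (\<mu> * r\<^sup>2) + norm (grad i x) * norm (xm i)"
        using mono[of x i] Cauchy_Schwarz_ineq2[of "grad i x" "xm i"] unfolding r_def
        by (simp add: abs_le_iff)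
      also have "\<dots> \<le> - (\<mu> * r\<^sup>2) + L * r * norm (xm i)"
        using gb[of i x] unfolding r_def by (simp add: mult_right_mono)
      also have "\<dots> < 0"
      proof -
        have "L * norm (xm i) < \<mu> * r" using rgt mu_pos by (simp add: field_simps)
        then have "r * (L * norm (xm i)) < r * (\<mu> * r)" using r0 by simp
        then show ?thesis by (simp add: power2_eq_square algebra_simps)
      qed
      finally show ?thesis .
    qed
    define t where "t = Min (range (\<lambda>i. - a i / (L * (norm d)\<^sup>2)))"
    have tpos: "t > 0" unfolding t_def
      using aneg L d0 by (subst Min_gr_iff) (auto simp: divide_neg_pos)
    have tle: "t \<le> - a i / (L * (norm d)\<^sup>2)" for i unfolding t_def by (rule Min_le) auto
    have imp: "f i (x + t *\<^sub>R d) < f i x" for i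
    proof -
      have "f i (x + t *\<^sub>R d) \<le> f i x + t * a i + L / 2 * t\<^sup>2 * (norm d)\<^sup>2"
        using U[of i, where x=x and y="x + t *\<^sub>R d"] tpos
        by (simp add: a_def power_mult_distrib)
      moreover have "L * t * (norm d)\<^sup>2 \<le> - a i"
        using tle[of i] L d0 by (simp add: field_simps)
      then have "L / 2 * t\<^sup>2 * (norm d)\<^sup>2 \<le> - t * a i / 2"
        using tpos mult_left_mono[of "L * t * (norm d)\<^sup>2" "- a i" "t/2"]
        by (simp add: power2_eq_square algebra_simps)
      moreover have "t * a i < 0" using tpos aneg[of i] by (simp add: mult_pos_neg)
      ultimately show ?thesis by linarith
    qed
    then show False using xP unfolding pareto_set_def
      by (auto intro: less_imp_le)
  qed
  have bP: "bounded (pareto_set f)"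
    unfolding bounded_iff using bnd by blast
  have gi: "norm (grad i x\<beta>) \<le> L * diameter (pareto_set f)" for i
  proof -
    have "norm (grad i x\<beta>) \<le> L * dist x\<beta> (xm i)" using gb[of i x\<beta>] by (simp add: dist_norm)
    also have "\<dots> \<le> L * diameter (pareto_set f)"
      using diameter_bounded_bound[OF bP Pb Pm[of i]] L by simp
    finally show ?thesis .
  qed
  let ?S = "{norm (\<Sum>i\<in>UNIV. z i *\<^sub>R grad i x\<beta>) | z. (\<Sum>i\<in>UNIV. \<bar>z i\<bar>) = 1}"
  have ne: "?S \<noteq> {}"
  proof -
    define z0 :: "'i \<Rightarrow> real" where "z0 = (\<lambda>i. if i = undefined then 1 else 0)"
    have "(\<Sum>i\<in>UNIV. \<bar>z0 i\<bar>) = 1" by (simp add: z0_def if_distrib cong: if_cong)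
    then show ?thesis by blast
  qed
  have "s \<le> L * diameter (pareto_set f)" if "s \<in> ?S" for s
  proof -
    obtain z where s: "s = norm (\<Sum>i\<in>UNIV. z i *\<^sub>R grad i x\<beta>)" and z1: "(\<Sum>i\<in>UNIV. \<bar>z i\<bar>) = 1"
      using \<open>s \<in> ?S\<close> by blast
    have "s \<le> (\<Sum>i\<in>UNIV. norm (z i *\<^sub>R grad i x\<beta>))" unfolding s by (rule norm_sum)
    also have "\<dots> \<le> (\<Sum>i\<in>UNIV. \<bar>z i\<bar> * (L * diameter (pareto_set f)))"
      by (intro sum_mono) (simp add: gi mult_left_mono)
    also have "\<dots> = L * diameter (pareto_set f)"
      by (simp add: sum_distrib_right[symmetric] z1)
    finally show ?thesis .
  qed
  then show ?thesis unfolding norm_1_2_def by (intro cSup_least ne) auto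
qed

end
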